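(* Let $k\ge 0$. Let $\mathcal{T}_k$ be the set of pairs of sequences $(b_1,\dots,b_k)$, $(t_1,\dots,t_k)$ such that $\{b_1,\dots,b_k,t_1,\dots,t_k\}=\{1,2,\dots,2k\}$, $b_1>b_2>\dots>b_k$, $t_1>t_2>\dots>t_k$, and $t_i<b_i$ for every $i$. For such a pair let $w$ be the word $b_k\,t_k\,b_{k-1}\,t_{k-1}\cdots b_1\,t_1$ (a permutation of $\{1,\dots,2k\}$). Then $$\sum_{(b,t)\in\mathcal{T}_k} q^{\mathrm{inv}(w)} = q^k\,C_k(q).$$
   Context: For a word/permutation $w=w_1\cdots w_m$, $\mathrm{inv}(w)=\#\{(i,j): i<j,\ w_i>w_j\}$. A Dyck path of length $k$ is a lattice path from $(0,0)$ to $(k,k)$ with unit steps $(1,0)$ (EAST) and $(0,1)$ (NORTH) containing no point $(x,y)$ with $x>y$; its area is the number of unit squares lying below the path and completely above the diagonal $y=x$. The $q$-Catalan polynomial is $C_k(q)=\sum_{P} q^{\mathrm{area}(P)}$, the sum over all Dyck paths $P$ of length $k$; in particular $C_0(q)=1$. (Equivalently, the pairs in $\mathcal{T}_k$ are the standard fillings of a two-row array with $k$ columns, columns decreasing bottom to top, both rows decreasing left to right, and $w$ is its column reading word, read columns right to left, each bottom to top.) *)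

theory Defs
  imports Main
begin

definition inv :: "nat list \<Rightarrow> nat" where
  "inv w = card {(i, j). i < j \<and> j < length w \<and> w ! i > w ! j}"

text \<open>Lattice paths as step lists: True = NORTH (0,1), False = EAST (1,0).
  lpoint p i is the lattice point reached after the first i steps.\<close>
definition lpoint :: "bool list \<Rightarrow> nat \<Rightarrow> nat \<times> nat" where
  "lpoint p i = (length (filter Not (take i p)), length (filter id (take i p)))"

definition dyck_paths :: "nat \<Rightarrow> bool list set" where
  "dyck_paths k = {p. length p = 2 * k \<and> lpoint p (length p) = (k, k) \<and>
      (\<forall>i \<le> length p. fst (lpoint p i) \<le> snd (lpoint p i))}"

text \<open>Area: number of unit squares [x,x+1] x [j,j+1] lying below the path
  (i.e. below some EAST step of the path in column x, which runs at height y, so j+1 \<le> y)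
  and completely above the diagonal (x+1 \<le> j).\<close>
definition area :: "bool list \<Rightarrow> nat" where
  "area p = card {(x, j). \<exists>i < length p. \<not> p ! i \<and> x = fst (lpoint p i) \<and>
                   x < j \<and> j < snd (lpoint p i)}"

definition qCatalan :: "nat \<Rightarrow> 'a::comm_ring_1 \<Rightarrow> 'a" where
  "qCatalan k q = (\<Sum>P\<in>dyck_paths k. q ^ area P)"

text \<open>T_k with 0-based lists: b ! (i-1) = b_i, t ! (i-1) = t_i.\<close>
definition Tset :: "nat \<Rightarrow> (nat list \<times> nat list) set" where
  "Tset k = {(b, t). length b = k \<and> length t = k \<and>
      set b \<union> set t = {1..2*k} \<and>
      sorted_wrt (>) b \<and> sorted_wrt (>) t \<and>
      (\<forall>i < k. t ! i < b ! i)}"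

definition word :: "nat list \<Rightarrow> nat list \<Rightarrow> nat list" where
  "word b t = concat (map (\<lambda>i. [b ! i, t ! i]) (rev [0..<length b]))"

end

theory Submission
  imports Defs
begin


lemma inv_snoc: "inv (xs @ [y]) = inv xs + length (filter (\<lambda>z. y < z) xs)"
proof -
  let ?n = "length xs"
  have eq: "{(i, j). i < j \<and> j < length (xs @ [y]) \<and> (xs @ [y]) ! i > (xs @ [y]) ! j}
     = {(i, j). i < j \<and> j < ?n \<and> xs ! i > xs ! j} \<union> (\<lambda>i. (i, ?n)) ` {i. i < ?n \<and> y < xs ! i}"
    (is "?L = ?A \<union> ?B")
  proof (rule set_eqI, clarify)
    fix i j
    show "((i, j) \<in> ?L) = ((i, j) \<in> ?A \<union> ?B)"
      by (cases "j < ?n") (auto simp: nth_append less_Suc_eq)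
  qed
  have fA: "finite ?A" by (rule finite_subset[of _ "{..<?n} \<times> {..<?n}"]) auto
  have d: "?A \<inter> ?B = {}" by auto
  have "card ?L = card ?A + card ?B" unfolding eq
    by (rule card_Un_disjoint) (use fA d in auto)
  moreover have "card ?B = card {i. i < ?n \<and> y < xs ! i}"
    by (rule card_image) (auto simp: inj_on_def)
  ultimately show ?thesis by (simp add: inv_def length_filter_conv_card)
qed

lemma word_Cons: "word (x # b) (y # t) = word b t @ [x, y]"
proof -
  have "rev [0..<Suc (length b)] = map Suc (rev [0..<length b]) @ [0]"
    by (simp add: upt_conv_Cons map_Suc_upt[symmetric] rev_map del: upt_Suc)
  then show ?thesis by (simp add: word_def comp_def del: upt_Suc)
qed

lemma length_word: "length (word b t) = 2 * length b"
  by (simp add: word_def length_concat comp_def sum_list_triv)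

lemma filter_word: "length b = length t \<Longrightarrow>
   length (filter P (word b t)) = length (filter P b) + length (filter P t)"
proof (induction b arbitrary: t)
  case Nil then show ?case by (simp add: word_def)
next
  case (Cons x b)
  then obtain y t' where t: "t = y # t'" by (cases t) auto
  with Cons show ?case by (simp add: word_Cons)
qed

lemma inv_word:
  "length b = length t \<Longrightarrow> sorted_wrt (>) b \<Longrightarrow> sorted_wrt (>) t \<Longrightarrow>
   (\<forall>i<length b. t ! i < b ! i) \<Longrightarrow>
   inv (word b t) = length b + card {(i, j). i < j \<and> j < length b \<and> t ! i < b ! j}"
proof (induction b arbitrary: t)
  case Nil then show ?case by (simp add: word_def inv_def)
next
  case (Cons x b)
  then obtain y t' where t: "t = y # t'" by (cases t) auto
  let ?n = "length b"
  have yx: "y < x" using Cons.prems(4) t by auto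
  have bx: "\<forall>z\<in>set b. z < x" using Cons.prems(2) by simp
  have ty: "\<forall>z\<in>set t'. z < y" using Cons.prems(3) t by simp
  have IH: "inv (word b t') = ?n + card {(i, j). i < j \<and> j < ?n \<and> t' ! i < b ! j}"
  proof (rule Cons.IH)
    show "\<forall>i<length b. t' ! i < b ! i"
    proof (intro allI impI)
      fix i assume "i < length b"
      then show "t' ! i < b ! i" using Cons.prems(4) t by (metis Suc_less_eq length_Cons nth_Cons_Suc)
    qed
  qed (use Cons.prems t in auto)
  have l: "length b = length t'" using Cons.prems t by simp
  have f1: "length (filter (\<lambda>z. x < z) (word b t')) = 0"
    using filter_word[OF l, of "\<lambda>z. x < z"] bx ty yx
    by (simp add: filter_empty_conv) (meson less_trans not_less_iff_gr_or_eq)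
  have f2: "length (filter (\<lambda>z. y < z) (word b t')) = card {j. j < ?n \<and> y < b ! j}"
    using filter_word[OF l, of "\<lambda>z. y < z"] ty
    by (simp add: length_filter_conv_card[of _ b] filter_empty_conv) (meson less_asym)
  have w: "inv (word (x # b) t) = inv (word b t') + 1 + card {j. j < ?n \<and> y < b ! j}"
    unfolding t word_Cons using inv_snoc[of "word b t' @ [x]" y] inv_snoc[of "word b t'" x] f1 f2 yx
    by simp
  let ?S = "{(i, j). i < j \<and> j < length (x # b) \<and> t ! i < (x # b) ! j}"
  let ?S' = "{(i, j). i < j \<and> j < ?n \<and> t' ! i < b ! j}"
  let ?C = "{j. j < ?n \<and> y < b ! j}"
  have eq: "?S = (\<lambda>j. (0, Suc j)) ` ?C \<union> (\<lambda>(i, j). (Suc i, Suc j)) ` ?S'"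
  proof (rule set_eqI, clarify)
    fix i j
    show "((i, j) \<in> ?S) = ((i, j) \<in> (\<lambda>j. (0, Suc j)) ` ?C \<union> (\<lambda>(i, j). (Suc i, Suc j)) ` ?S')"
    proof (cases i)
      case 0 then show ?thesis by (cases j) (auto simp: t)
    next
      case (Suc i') then show ?thesis by (cases j) (auto simp: t image_iff)
    qed
  qed
  have fS': "finite ?S'" by (rule finite_subset[of _ "{..<?n} \<times> {..<?n}"]) auto
  have "card ?S = card ((\<lambda>j. (0::nat, Suc j)) ` ?C) + card ((\<lambda>(i, j). (Suc i, Suc j)) ` ?S')"
    unfolding eq
  proof (rule card_Un_disjoint)
    show "finite ((\<lambda>j. (0::nat, Suc j)) ` ?C)" by simp
    show "finite ((\<lambda>(i, j). (Suc i, Suc j)) ` ?S')" using fS' by simp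
  qed auto
  also have "\<dots> = card ?C + card ?S'"
    by (subst card_image, simp add: inj_on_def)+ (auto simp: inj_on_def)
  finally show ?case using w IH by simp
qed



lemma cnt_ge:
  fixes xs :: "nat list"
  assumes "sorted_wrt (>) xs" "j < length xs" "P (xs ! j)" "\<And>x y. x \<le> y \<Longrightarrow> P y \<Longrightarrow> P x"
  shows "length xs - j \<le> card {i. i < length xs \<and> P (xs ! i)}"
proof -
  have "{j..<length xs} \<subseteq> {i. i < length xs \<and> P (xs ! i)}"
  proof
    fix i assume i: "i \<in> {j..<length xs}"
    have "xs ! i \<le> xs ! j"
    proof (cases "i = j")
      case False then show ?thesis using i assms(1) sorted_wrt_nth_less[of "(>)" xs j i] by auto
    qed simp
    then show "i \<in> {i. i < length xs \<and> P (xs ! i)}" using i assms(3,4) by auto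
  qed
  from card_mono[OF _ this] show ?thesis by simp
qed

lemma cnt_le:
  fixes xs :: "nat list"
  assumes "sorted_wrt (>) xs" "j < length xs" "\<not> P (xs ! j)" "\<And>x y. x \<le> y \<Longrightarrow> P y \<Longrightarrow> P x"
  shows "card {i. i < length xs \<and> P (xs ! i)} \<le> length xs - Suc j"
proof -
  have "{i. i < length xs \<and> P (xs ! i)} \<subseteq> {Suc j..<length xs}"
  proof
    fix i assume i: "i \<in> {i. i < length xs \<and> P (xs ! i)}"
    show "i \<in> {Suc j..<length xs}"
    proof (rule ccontr)
      assume "i \<notin> {Suc j..<length xs}"
      then have "i \<le> j" using i by auto
      then have "xs ! j \<le> xs ! i"
        using assms(1,2) sorted_wrt_nth_less[of "(>)" xs i j] by (cases "i = j") auto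
      then show False using i assms(3,4) by auto
    qed
  qed
  from card_mono[OF _ this] show ?thesis by simp
qed

lemma card_set_filter:
  assumes "distinct xs"
  shows "card {u \<in> set xs. P u} = card {i. i < length xs \<and> P (xs ! i)}"
proof -
  have "{u \<in> set xs. P u} = (\<lambda>i. xs ! i) ` {i. i < length xs \<and> P (xs ! i)}"
    by (auto simp: in_set_conv_nth)
  moreover have "inj_on (\<lambda>i. xs ! i) {i. i < length xs \<and> P (xs ! i)}"
    using assms by (auto simp: inj_on_def nth_eq_iff_index_eq)
  ultimately show ?thesis by (simp add: card_image)
qed

lemma sorted_gt_distinct: "sorted_wrt (>) (xs::nat list) \<Longrightarrow> distinct xs"
  by (auto simp: distinct_conv_nth sorted_wrt_iff_nth_less) (metis less_irrefl linorder_neqE_nat)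

definition phi :: "nat \<Rightarrow> nat list \<Rightarrow> bool list" where
  "phi k t = map (\<lambda>n. Suc n \<in> set t) [0..<2*k]"

locale TT =
  fixes k :: nat and b t :: "nat list"
  assumes lb: "length b = k" and lt: "length t = k"
    and un: "set b \<union> set t = {1..2*k}"
    and sb: "sorted_wrt (>) b" and st: "sorted_wrt (>) t"
begin

lemma db: "distinct b" using sb by (rule sorted_gt_distinct)
lemma dt: "distinct t" using st by (rule sorted_gt_distinct)
lemma cb: "card (set b) = k" using db lb by (simp add: distinct_card)
lemma ct: "card (set t) = k" using dt lt by (simp add: distinct_card)

lemma disj: "set b \<inter> set t = {}"
proof -
  have "card (set b) + card (set t) = card (set b \<union> set t) + card (set b \<inter> set t)"
    by (rule card_Un_Int) auto
  then have "card (set b \<inter> set t) = 0" using cb ct un by simp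
  then show ?thesis by simp
qed

lemma memb: "u \<in> set b \<longleftrightarrow> u \<in> {1..2*k} \<and> u \<notin> set t"
  using un disj by blast

lemma memt: "u \<in> set t \<Longrightarrow> u \<in> {1..2*k}" using un by blast

lemma neq: "i < k \<Longrightarrow> j < k \<Longrightarrow> t ! i \<noteq> b ! j"
  using disj lb lt by (metis disjoint_iff nth_mem)

lemma lpoint_phi:
  assumes n: "n \<le> 2 * k"
  shows "lpoint (phi k t) n = (card {i. i < k \<and> b ! i \<le> n}, card {i. i < k \<and> t ! i \<le> n})"
proof -
  have tk: "take n (phi k t) = map (\<lambda>m. Suc m \<in> set t) [0..<n]"
    using n by (simp add: phi_def take_map)
  have c1: "length (filter Not (take n (phi k t))) = card {m. m < n \<and> Suc m \<notin> set t}"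
    unfolding tk by (simp add: filter_map comp_def length_filter_conv_card) (intro arg_cong[where f=card], auto)
  have c2: "length (filter id (take n (phi k t))) = card {m. m < n \<and> Suc m \<in> set t}"
    unfolding tk by (simp add: filter_map comp_def length_filter_conv_card) (intro arg_cong[where f=card], auto)
  have e1: "{u \<in> set b. u \<le> n} = Suc ` {m. m < n \<and> Suc m \<notin> set t}"
  proof (rule set_eqI)
    fix u show "u \<in> {u \<in> set b. u \<le> n} \<longleftrightarrow> u \<in> Suc ` {m. m < n \<and> Suc m \<notin> set t}"
      using n by (cases u) (auto simp: memb)
  qed
  have e2: "{u \<in> set t. u \<le> n} = Suc ` {m. m < n \<and> Suc m \<in> set t}"
  proof (rule set_eqI)
    fix u show "u \<in> {u \<in> set t. u \<le> n} \<longleftrightarrow> u \<in> Suc ` {m. m < n \<and> Suc m \<in> set t}"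
      using n memt[of u] by (cases u) auto
  qed
  have "card {m. m < n \<and> Suc m \<notin> set t} = card {u \<in> set b. u \<le> n}"
    unfolding e1 by (simp add: card_image)
  also have "\<dots> = card {i. i < k \<and> b ! i \<le> n}" using card_set_filter[OF db] lb by simp
  finally have a: "card {m. m < n \<and> Suc m \<notin> set t} = card {i. i < k \<and> b ! i \<le> n}" .
  have "card {m. m < n \<and> Suc m \<in> set t} = card {u \<in> set t. u \<le> n}"
    unfolding e2 by (simp add: card_image)
  also have "\<dots> = card {i. i < k \<and> t ! i \<le> n}" using card_set_filter[OF dt] lt by simp
  finally have b: "card {m. m < n \<and> Suc m \<in> set t} = card {i. i < k \<and> t ! i \<le> n}" .
  show ?thesis unfolding lpoint_def using c1 c2 a b by simp
qed


lemma bnd_b: "i < k \<Longrightarrow> b ! i \<in> {1..2*k}" using un lb by (metis UnI1 nth_mem)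
lemma bnd_t: "i < k \<Longrightarrow> t ! i \<in> {1..2*k}" using un lt by (metis UnI2 nth_mem)

lemma ballot_imp:
  assumes bal: "\<forall>i<k. t ! i < b ! i"
  shows "card {i. i < k \<and> b ! i \<le> m} \<le> card {i. i < k \<and> t ! i \<le> m}"
proof -
  define e where "e = card {i. i < k \<and> b ! i \<le> m}"
  show ?thesis
  proof (cases "e = 0")
    case True then show ?thesis unfolding e_def by linarith
  next
    case False
    have ek: "e \<le> k" unfolding e_def by (rule order_trans[OF card_mono[of "{..<k}"]]) auto
    define j where "j = k - e"
    have jk: "j < k" using False ek by (simp add: j_def)
    have "b ! j \<le> m"
    proof (rule ccontr)
      assume "\<not> b ! j \<le> m"
      from cnt_le[of b j "\<lambda>z. z \<le> m"] this sb jk lb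
      have "e \<le> k - Suc j" by (simp add: e_def)
      then show False using False ek by (simp add: j_def)
    qed
    then have "t ! j \<le> m" using bal jk by (meson less_imp_le order_trans)
    from cnt_ge[of t j "\<lambda>z. z \<le> m"] this st jk lt
    have "k - j \<le> card {i. i < k \<and> t ! i \<le> m}" by simp
    then show ?thesis using ek by (simp add: j_def e_def[symmetric])
  qed
qed

lemma imp_ballot:
  assumes d: "\<forall>m\<le>2*k. card {i. i < k \<and> b ! i \<le> m} \<le> card {i. i < k \<and> t ! i \<le> m}"
  shows "\<forall>i<k. t ! i < b ! i"
proof (intro allI impI)
  fix j assume jk: "j < k"
  let ?m = "b ! j"
  have m: "?m \<le> 2 * k" using bnd_b[OF jk] by simp
  from cnt_ge[of b j "\<lambda>z. z \<le> ?m"] sb jk lb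
  have "k - j \<le> card {i. i < k \<and> b ! i \<le> ?m}" by simp
  also have "\<dots> \<le> card {i. i < k \<and> t ! i \<le> ?m}" using d m by simp
  finally have A: "k - j \<le> card {i. i < k \<and> t ! i \<le> ?m}" .
  show "t ! j < b ! j"
  proof (rule ccontr)
    assume "\<not> t ! j < b ! j"
    then have "\<not> t ! j \<le> ?m" using neq[OF jk jk] by simp
    from cnt_le[of t j "\<lambda>z. z \<le> ?m"] this st jk lt
    have "card {i. i < k \<and> t ! i \<le> ?m} \<le> k - Suc j" by simp
    then show False using A jk by simp
  qed
qed

lemma all_le: "card {i. i < k \<and> b ! i \<le> 2 * k} = k" "card {i. i < k \<and> t ! i \<le> 2 * k} = k"
proof -
  have "{i. i < k \<and> b ! i \<le> 2 * k} = {..<k}" using bnd_b by auto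
  then show "card {i. i < k \<and> b ! i \<le> 2 * k} = k" by simp
  have "{i. i < k \<and> t ! i \<le> 2 * k} = {..<k}" using bnd_t by auto
  then show "card {i. i < k \<and> t ! i \<le> 2 * k} = k" by simp
qed

lemma length_phi: "length (phi k t) = 2 * k" by (simp add: phi_def)

lemma dyck_iff: "phi k t \<in> dyck_paths k \<longleftrightarrow> (\<forall>i<k. t ! i < b ! i)"
proof
  assume "phi k t \<in> dyck_paths k"
  then have "\<forall>m\<le>2*k. fst (lpoint (phi k t) m) \<le> snd (lpoint (phi k t) m)"
    by (simp add: dyck_paths_def length_phi)
  then show "\<forall>i<k. t ! i < b ! i" using lpoint_phi by (intro imp_ballot) simp
next
  assume "\<forall>i<k. t ! i < b ! i"
  then show "phi k t \<in> dyck_paths k"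
    using ballot_imp by (simp add: dyck_paths_def length_phi lpoint_phi all_le)
qed

lemma less_b: "i < k \<Longrightarrow> j < k \<Longrightarrow> b ! i < b ! j \<longleftrightarrow> j < i"
  using sb lb by (metis linorder_neqE_nat not_less_iff_gr_or_eq sorted_wrt_nth_less)

lemma lp_east:
  assumes jj: "jj < k"
  shows "lpoint (phi k t) (b ! jj - 1) = (k - Suc jj, card {i. i < k \<and> t ! i < b ! jj})"
proof -
  have bj: "1 \<le> b ! jj" "b ! jj \<le> 2 * k" using bnd_b[OF jj] by auto
  have "{i. i < k \<and> b ! i \<le> b ! jj - 1} = {i. i < k \<and> b ! i < b ! jj}" using bj by auto
  also have "\<dots> = {Suc jj..<k}" using less_b jj by auto
  finally have e: "card {i. i < k \<and> b ! i \<le> b ! jj - 1} = k - Suc jj" by simp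
  have "{i. i < k \<and> t ! i \<le> b ! jj - 1} = {i. i < k \<and> t ! i < b ! jj}" using bj by auto
  then show ?thesis using lpoint_phi[of "b ! jj - 1"] bj e by simp
qed

lemma east_iff:
  assumes n: "n < 2 * k"
  shows "\<not> phi k t ! n \<longleftrightarrow> (\<exists>jj<k. b ! jj = Suc n)"
proof -
  have "\<not> phi k t ! n \<longleftrightarrow> Suc n \<in> set b" using n by (simp add: phi_def memb)
  also have "\<dots> \<longleftrightarrow> (\<exists>jj<k. b ! jj = Suc n)" using lb by (auto simp: in_set_conv_nth)
  finally show ?thesis .
qed

lemma Nc_le: "card {i. i < k \<and> P i} \<le> k"
  by (rule order_trans[OF card_mono[of "{..<k}"]]) auto


end

context TT begin
lemma area_phi: "area (phi k t) = card {(i, j). i < j \<and> j < k \<and> t ! i < b ! j}"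
proof -
  let ?p = "phi k t"
  let ?A = "{(x, j). \<exists>i < length ?p. \<not> ?p ! i \<and> x = fst (lpoint ?p i) \<and>
                   x < j \<and> j < snd (lpoint ?p i)}"
  let ?S = "{(i, j). i < j \<and> j < k \<and> t ! i < b ! j}"
  define f :: "nat \<times> nat \<Rightarrow> nat \<times> nat" where "f = (\<lambda>(i, jj). (k - Suc jj, k - Suc i))"
  have mono_lt: "\<And>v x y. x \<le> y \<Longrightarrow> y < v \<Longrightarrow> x < (v::nat)" by simp
  have "?A = f ` ?S"
  proof (rule set_eqI, clarify)
    fix x j
    show "(x, j) \<in> ?A \<longleftrightarrow> (x, j) \<in> f ` ?S"
    proof
      assume "(x, j) \<in> ?A"
      then obtain n where n: "n < 2 * k" "\<not> ?p ! n" "x = fst (lpoint ?p n)"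
        "x < j" "j < snd (lpoint ?p n)" by (auto simp: length_phi)
      obtain jj where jj: "jj < k" "b ! jj = Suc n" using east_iff n by auto
      have nn: "n = b ! jj - 1" using jj by simp
      have xj: "x = k - Suc jj" "j < card {i. i < k \<and> t ! i < b ! jj}"
        using n lp_east[OF jj(1)] nn by auto
      have jk: "j < k" using xj(2) Nc_le[of "\<lambda>i. t ! i < b ! jj"] by simp
      define i where "i = k - Suc j"
      have ij: "i < jj" using jk xj n(4) by (simp add: i_def)
      have ik: "i < k" using jk by (simp add: i_def)
      have "t ! i < b ! jj"
      proof (rule ccontr)
        assume "\<not> t ! i < b ! jj"
        from cnt_le[of t i "\<lambda>z. z < b ! jj"] this st ik lt
        have "card {i. i < k \<and> t ! i < b ! jj} \<le> k - Suc i" by simp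
        then show False using xj jk by (simp add: i_def)
      qed
      then have Si: "(i, jj) \<in> ?S" using ij jj by simp
      have fi: "(x, j) = f (i, jj)" using xj jk by (simp add: i_def f_def)
      show "(x, j) \<in> f ` ?S" using fi Si by (rule image_eqI)
    next
      assume "(x, j) \<in> f ` ?S"
      then obtain i jj where ij: "i < jj" "jj < k" "t ! i < b ! jj" "x = k - Suc jj" "j = k - Suc i"
        by (auto simp: f_def)
      define n where "n = b ! jj - 1"
      have bj: "1 \<le> b ! jj" "b ! jj \<le> 2 * k" using bnd_b[OF ij(2)] by auto
      have n2: "n < 2 * k" using bj by (simp add: n_def)
      have ne: "\<not> ?p ! n" using east_iff[OF n2] ij(2) bj by (auto simp: n_def)
      from cnt_ge[of t i "\<lambda>z. z < b ! jj"] ij st lt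
      have "k - i \<le> card {i. i < k \<and> t ! i < b ! jj}" by simp
      then have "x < j \<and> j < snd (lpoint ?p n)"
        using lp_east[OF ij(2)] ij by (simp add: n_def) arith
      moreover have "x = fst (lpoint ?p n)" using lp_east[OF ij(2)] ij by (simp add: n_def)
      ultimately show "(x, j) \<in> ?A" using n2 ne by (auto simp: length_phi)
    qed
  qed
  moreover have "inj_on f ?S" by (auto simp: inj_on_def f_def)
  ultimately show ?thesis unfolding area_def by (simp add: card_image)
qed

end


context TT begin
lemma memt_phi: "u \<in> set t \<longleftrightarrow> u \<in> {1..2*k} \<and> phi k t ! (u - 1)"
proof (cases "u \<in> {1..2*k}")
  case True
  then have "u - 1 < 2 * k" by auto
  then have "phi k t ! (u - 1) = (Suc (u - 1) \<in> set t)" by (simp add: phi_def)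
  then show ?thesis using True by simp
next
  case False then show ?thesis using memt by blast
qed

lemma setb_eq: "set b = {1..2*k} - set t" using memb by blast
end

lemma TT_of: "(b, t) \<in> Tset k \<Longrightarrow> TT k b t"
  unfolding Tset_def by unfold_locales auto

lemma ballot_of: "(b, t) \<in> Tset k \<Longrightarrow> \<forall>i<k. t ! i < b ! i"
  unfolding Tset_def by auto

lemma rev_sorted_eq:
  fixes xs ys :: "nat list"
  assumes "sorted_wrt (>) xs" "sorted_wrt (>) ys" "set xs = set ys"
  shows "xs = ys"
proof -
  have "rev xs = rev ys"
    by (rule strict_sorted_equal) (use assms in \<open>simp_all add: sorted_wrt_rev\<close>)
  then show ?thesis by simp
qed

lemma inj_phi: "inj_on (\<lambda>(b, t). phi k t) (Tset k)"
proof (rule inj_onI, clarify)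
  fix b t b' t'
  assume A: "(b, t) \<in> Tset k" and A': "(b', t') \<in> Tset k" and e: "phi k t = phi k t'"
  interpret X: TT k b t by (rule TT_of[OF A])
  interpret Y: TT k b' t' by (rule TT_of[OF A'])
  have st: "set t = set t'" by (rule set_eqI) (simp only: X.memt_phi Y.memt_phi e)
  then have sb: "set b = set b'" using X.setb_eq Y.setb_eq by simp
  show "b = b' \<and> t = t'"
    using rev_sorted_eq[OF X.sb Y.sb sb] rev_sorted_eq[OF X.st Y.st st] by simp
qed

lemma img_phi: "(\<lambda>(b, t). phi k t) ` Tset k = dyck_paths k"
proof (rule set_eqI, rule iffI)
  fix p assume "p \<in> (\<lambda>(b, t). phi k t) ` Tset k"
  then obtain b t where A: "(b, t) \<in> Tset k" and p: "p = phi k t" by auto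
  interpret X: TT k b t by (rule TT_of[OF A])
  show "p \<in> dyck_paths k" using X.dyck_iff ballot_of[OF A] p by simp
next
  fix p assume P: "p \<in> dyck_paths k"
  have lp: "length p = 2 * k" and lk: "lpoint p (2 * k) = (k, k)" using P by (auto simp: dyck_paths_def)
  define T where "T = {u \<in> {1..2*k}. p ! (u - 1)}"
  define B where "B = {1..2*k} - T"
  define t where "t = rev (sorted_list_of_set T)"
  define b where "b = rev (sorted_list_of_set B)"
  have fT: "finite T" "finite B" by (auto simp: T_def B_def)
  have setT: "set t = T" "set b = B" using fT by (auto simp: t_def b_def)
  have T_img: "T = Suc ` {i. i < 2 * k \<and> p ! i}"
  proof (rule set_eqI)
    fix u show "u \<in> T \<longleftrightarrow> u \<in> Suc ` {i. i < 2 * k \<and> p ! i}"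
      by (cases u) (auto simp: T_def)
  qed
  have "card {i. i < 2 * k \<and> p ! i} = length (filter id p)"
    using lp by (simp add: length_filter_conv_card)
  also have "\<dots> = k" using lk lp by (simp add: lpoint_def)
  finally have cT: "card T = k" unfolding T_img by (simp add: card_image)
  have Tsub: "T \<subseteq> {1..2*k}" by (auto simp: T_def)
  have "card B = card {1..2*k} - card T" unfolding B_def using fT Tsub by (simp add: card_Diff_subset)
  then have cB: "card B = k" using cT by simp
  have lt: "length t = k" and lb: "length b = k" using cT cB by (simp_all add: t_def b_def)
  have sorted: "sorted_wrt (>) t" "sorted_wrt (>) b"
    by (simp_all add: t_def b_def sorted_wrt_rev strict_sorted_list_of_set)
  have un: "set b \<union> set t = {1..2*k}" using setT by (auto simp: B_def T_def)
  interpret X: TT k b t by unfold_locales (use lt lb un sorted in auto)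
  have ph: "phi k t = p"
  proof (rule nth_equalityI)
    show "length (phi k t) = length p" using lp X.length_phi by simp
    fix i assume "i < length (phi k t)"
    then have i: "i < 2 * k" using X.length_phi by simp
    then show "phi k t ! i = p ! i" by (simp add: phi_def setT T_def)
  qed
  have "(b, t) \<in> Tset k" unfolding Tset_def
    using lt lb un sorted X.dyck_iff ph P by simp
  then show "p \<in> (\<lambda>(b, t). phi k t) ` Tset k" using ph by force
qed

theorem mainTheorem1:
  fixes k :: nat and q :: "'a::comm_ring_1"
  shows "(\<Sum>(b, t)\<in>Tset k. q ^ inv (word b t)) = q ^ k * qCatalan k q"
proof -
  have "(\<Sum>(b, t)\<in>Tset k. q ^ inv (word b t)) = (\<Sum>(b, t)\<in>Tset k. q ^ k * q ^ area (phi k t))"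
  proof (rule sum.cong, simp, clarify)
    fix b t assume A: "(b, t) \<in> Tset k"
    interpret X: TT k b t by (rule TT_of[OF A])
    have "inv (word b t) = k + area (phi k t)"
      using inv_word[of b t] X.lb X.lt X.sb X.st ballot_of[OF A] X.area_phi by simp
    then show "q ^ inv (word b t) = q ^ k * q ^ area (phi k t)" by (simp add: power_add)
  qed
  also have "\<dots> = q ^ k * (\<Sum>(b, t)\<in>Tset k. q ^ area (phi k t))"
    by (simp add: sum_distrib_left case_prod_beta)
  also have "(\<Sum>(b, t)\<in>Tset k. q ^ area (phi k t)) = (\<Sum>P\<in>dyck_paths k. q ^ area P)"
    by (rule sym, rule sum.reindex_cong[OF inj_phi img_phi[symmetric]]) auto
  finally show ?thesis by (simp add: qCatalan_def)
qed


end
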